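(* Let $q$ be an indeterminate, let $\mathcal W$ be the division algebra over $\mathbb{C}(q)$ generated by $U^{\pm1},V^{\pm1}$ subject to $VU=q^2UV$ (the fraction division algebra of this quantum torus), and let $f\in\mathbb{C}(q)(X)$ be a nonzero rational function such that the algebra homomorphism $\Psi:\mathcal W\to\mathcal W$ with $\Psi(U)=f(U)V$ and $\Psi(V)=U^{-1}$ is an isomorphism. Then $\Psi$ has period $5$ (i.e. $\Psi^5=\mathrm{id}$) if and only if $f(f(U)V)=V\,f(U^{-1}f(V^{-1}))\,U$ in $\mathcal W$.
   Context: For a rational function $f\in\mathbb{C}(q)(X)$ and an element $Y\in\mathcal W$, $f(Y)$ denotes the evaluation of $f$ at $Y$ in $\mathcal W$ (assumed well defined). *)

theory Defs
  imports "HOL-Computational_Algebra.Computational_Algebra"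
begin

type_synonym cq = "complex poly fract"

definition qq :: cq where "qq = Fract [:0, 1:] 1"

type_synonym cqX = "cq poly fract"

definition peval :: "(cq \<Rightarrow> 'w::division_ring) \<Rightarrow> cq poly \<Rightarrow> 'w \<Rightarrow> 'w" where
  "peval emb p Y = (\<Sum>i\<le>degree p. emb (coeff p i) * Y ^ i)"

text \<open>Evaluation of a rational function, using a reduced representation p/r
  (coprime, r nonzero; the value does not depend on the choice up to units).\<close>
definition reval :: "(cq \<Rightarrow> 'w::division_ring) \<Rightarrow> cqX \<Rightarrow> 'w \<Rightarrow> 'w" where
  "reval emb f Y = (let (p, r) = (SOME (p, r). r \<noteq> 0 \<and> coprime p r \<and> f = Fract p r)
                    in peval emb p Y * inverse (peval emb r Y))"

inductive_set gen_divring :: "(cq \<Rightarrow> 'w::division_ring) \<Rightarrow> 'w \<Rightarrow> 'w \<Rightarrow> 'w set"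
  for emb U V where
  scal: "emb c \<in> gen_divring emb U V"
| genU: "U \<in> gen_divring emb U V"
| genV: "V \<in> gen_divring emb U V"
| add: "x \<in> gen_divring emb U V \<Longrightarrow> y \<in> gen_divring emb U V \<Longrightarrow> x + y \<in> gen_divring emb U V"
| neg: "x \<in> gen_divring emb U V \<Longrightarrow> - x \<in> gen_divring emb U V"
| mult: "x \<in> gen_divring emb U V \<Longrightarrow> y \<in> gen_divring emb U V \<Longrightarrow> x * y \<in> gen_divring emb U V"
| inv: "x \<in> gen_divring emb U V \<Longrightarrow> inverse x \<in> gen_divring emb U V"

text \<open>W is (up to isomorphism) the division algebra of fractions of the quantum torus:
  a division ring with a central embedding of C(q), generated by invertible U, V with
  V U = q^2 U V, in which the monomials U^i V^j (i, j integers) are C(q)-linearly independent.\<close>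
definition is_quantum_torus_fraction_algebra ::
  "(cq \<Rightarrow> 'w::division_ring) \<Rightarrow> 'w \<Rightarrow> 'w \<Rightarrow> bool" where
  "is_quantum_torus_fraction_algebra emb U V \<longleftrightarrow>
     (\<forall>a b. emb (a + b) = emb a + emb b) \<and>
     (\<forall>a b. emb (a * b) = emb a * emb b) \<and>
     emb 1 = 1 \<and>
     (\<forall>c x. emb c * x = x * emb c) \<and>
     U \<noteq> 0 \<and> V \<noteq> 0 \<and>
     V * U = emb (qq ^ 2) * U * V \<and>
     (\<forall>F c. finite F \<longrightarrow>
        (\<Sum>(i, j)\<in>F. emb (c (i, j)) * U powi i * V powi j) = 0 \<longrightarrow>
        (\<forall>ij\<in>F. c ij = 0)) \<and>
     gen_divring emb U V = UNIV"

end

theory Submission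
  imports Defs
begin

lemma hom0:
  assumes ha: "\<And>x y. h (x + y) = h x + h y"
  shows "h (0::'w::division_ring) = (0::'v::division_ring)"
  using ha[of 0 0] by simp

lemma homneg:
  assumes ha: "\<And>x y. h (x + y) = h x + h y"
  shows "h (- (x::'w::division_ring)) = - (h x :: 'v::division_ring)"
proof -
  have "h (- x) + h x = 0" using ha[of "-x" x] hom0[of h, OF ha] by simp
  thus ?thesis by (simp add: eq_neg_iff_add_eq_0)
qed

lemma hominv:
  assumes ha: "\<And>x y. h (x + y) = h x + h y"
    and hm: "\<And>x y. h (x * y) = h x * h y"
    and h1: "h 1 = 1"
  shows "h (inverse (x::'w::division_ring)) = inverse (h x :: 'v::division_ring)"
proof (cases "x = 0")
  case True thus ?thesis using hom0[of h, OF ha] by simp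
next
  case False
  have "h x * h (inverse x) = 1" using hm[of x "inverse x"] False h1 by simp
  from inverse_unique[OF this] show ?thesis by simp
qed

lemma homsum:
  assumes ha: "\<And>x y. h (x + y) = h x + h y"
  shows "h (\<Sum>i\<in>A. g i :: 'w::division_ring) = (\<Sum>i\<in>A. h (g i) :: 'v::division_ring)"
proof (induction A rule: infinite_finite_induct)
  case (infinite A) thus ?case using hom0[of h, OF ha] by simp
next
  case empty thus ?case using hom0[of h, OF ha] by simp
next
  case (insert x F) thus ?case using ha by simp
qed

lemma hompow:
  assumes hm: "\<And>x y. h (x * y) = h x * h y"
    and h1: "h 1 = 1"
  shows "h ((x::'w::division_ring) ^ n) = (h x :: 'v::division_ring) ^ n"
  by (induction n) (simp_all add: h1 hm)

lemma hom_peval: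
  assumes ha: "\<And>x y. h (x + y) = h x + h y"
    and hm: "\<And>x y. h (x * y) = h x * h y"
    and h1: "h 1 = 1"
    and hs: "\<And>c. h (emb c) = emb c"
  shows "h (peval emb p Y) = peval emb p (h Y)"
  unfolding peval_def
  by (simp add: homsum[of h, OF ha] hm hs hompow[of h, OF hm h1])

lemma hom_reval:
  assumes ha: "\<And>x y. h (x + y) = h x + h y"
    and hm: "\<And>x y. h (x * y) = h x * h y"
    and h1: "h 1 = 1"
    and hs: "\<And>c. h (emb c) = emb c"
  shows "h (reval emb f Y) = reval emb f (h Y)"
proof -
  obtain p r where pr: "(SOME (p, r). r \<noteq> 0 \<and> coprime p r \<and> f = Fract p r) = (p, r)"
    by (cases "(SOME (p, r). r \<noteq> 0 \<and> coprime p r \<and> f = Fract p r)") auto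
  show ?thesis unfolding reval_def Let_def pr
    by (simp add: hm hom_peval[of h, OF ha hm h1 hs] hominv[of h, OF ha hm h1])
qed

lemma funpow5: "(h ^^ 5) x = h (h (h (h (h x))))"
  by (simp add: numeral_eq_Suc)

theorem lemma11:
  fixes emb :: "cq \<Rightarrow> 'w::division_ring" and U V :: 'w
    and f :: cqX and \<Psi> :: "'w \<Rightarrow> 'w"
  assumes W: "is_quantum_torus_fraction_algebra emb U V"
    and f_nz: "f \<noteq> 0"
    and hom_add: "\<And>x y. \<Psi> (x + y) = \<Psi> x + \<Psi> y"
    and hom_mult: "\<And>x y. \<Psi> (x * y) = \<Psi> x * \<Psi> y"
    and hom_scal: "\<And>c. \<Psi> (emb c) = emb c"
    and PsiU: "\<Psi> U = reval emb f U * V"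
    and PsiV: "\<Psi> V = inverse U"
    and iso: "bij \<Psi>"
  shows "(\<Psi> ^^ 5 = id) \<longleftrightarrow>
         reval emb f (reval emb f U * V)
           = V * reval emb f (inverse U * reval emb f (inverse V)) * U"
proof -
  define F where "F = reval emb f"
  have U0: "U \<noteq> 0" and V0: "V \<noteq> 0" and e1: "emb 1 = 1"
    and G: "gen_divring emb U V = UNIV"
    using W unfolding is_quantum_torus_fraction_algebra_def by auto
  have h1: "\<Psi> 1 = 1" using hom_scal[of 1] e1 by simp
  have P0: "\<Psi> 0 = 0" using hom0[of \<Psi>, OF hom_add] .
  have Pinv: "\<And>x. \<Psi> (inverse x) = inverse (\<Psi> x)"
    using hominv[of \<Psi>, OF hom_add hom_mult h1] .
  have Pneg: "\<And>x. \<Psi> (- x) = - \<Psi> x" using homneg[of \<Psi>, OF hom_add] .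
  have PF: "\<And>Y. \<Psi> (F Y) = F (\<Psi> Y)" unfolding F_def
    using hom_reval[of \<Psi>, OF hom_add hom_mult h1 hom_scal] .
  have PsiU': "\<Psi> U = F U * V" using PsiU F_def by simp
  have FU0: "F U \<noteq> 0"
  proof
    assume "F U = 0"
    then have "\<Psi> U = \<Psi> 0" using PsiU P0 F_def by simp
    then show False using iso U0 by (metis bij_is_inj injD)
  qed
  define b where "b = inverse U * F (inverse V)"
  define w where "w = V * F b"
  define A where "A = F U * V"
  have Pb: "\<Psi> b = inverse V"
  proof -
    have "\<Psi> b = inverse (F U * V) * F U"
      unfolding b_def using PsiU' PsiV by (simp add: hom_mult Pinv PF)
    also have "\<dots> = inverse V" using FU0 V0
      by (simp add: nonzero_inverse_mult_distrib mult.assoc)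
    finally show ?thesis .
  qed
  have "\<Psi> w = \<Psi> V * F (\<Psi> b)" unfolding w_def by (simp add: hom_mult PF)
  then have Pw: "\<Psi> w = b" using PsiV Pb b_def by simp
  have PiV: "\<Psi> (inverse V) = U" using PsiV Pinv by simp
  have PU: "\<Psi> U = A" using PsiU' A_def by simp
  have PA: "\<Psi> A = F A * inverse U" unfolding A_def using PsiU' PsiV
    by (simp add: hom_mult PF)
  have P5w: "(\<Psi> ^^ 5) w = F A * inverse U"
    by (simp add: funpow5 Pw Pb PiV PU PA)
  have cond: "(F A = w * U) \<longleftrightarrow> (\<Psi> ^^ 5) w = w"
    unfolding P5w using U0
    by (metis mult.assoc nonzero_eq_divide_eq divide_inverse right_inverse mult_1_right)
  have rhs: "reval emb f (reval emb f U * V)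
           = V * reval emb f (inverse U * reval emb f (inverse V)) * U \<longleftrightarrow> F A = w * U"
    unfolding A_def w_def b_def F_def by simp
  show ?thesis unfolding rhs cond
  proof
    assume "\<Psi> ^^ 5 = id" thus "(\<Psi> ^^ 5) w = w" by simp
  next
    assume H: "(\<Psi> ^^ 5) w = w"
    have a1: "\<Psi> (\<Psi> (\<Psi> (\<Psi> (\<Psi> w)))) = w" using H by (simp add: funpow5)
    have iV: "\<Psi> (\<Psi> (\<Psi> (\<Psi> (\<Psi> (inverse V))))) = inverse V"
      using arg_cong[OF a1, of "\<lambda>x. \<Psi> (\<Psi> x)"] Pw Pb by simp
    have fU: "\<Psi> (\<Psi> (\<Psi> (\<Psi> (\<Psi> U)))) = U"
      using arg_cong[OF iV, of \<Psi>] PiV by simp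
    have fV: "\<Psi> (\<Psi> (\<Psi> (\<Psi> (\<Psi> V)))) = V"
      using arg_cong[OF iV, of inverse] by (simp add: Pinv)
    have "\<Psi> (\<Psi> (\<Psi> (\<Psi> (\<Psi> x)))) = x" if "x \<in> gen_divring emb U V" for x
      using that
      by (induction x rule: gen_divring.induct)
         (simp_all add: hom_scal fU fV hom_add hom_mult Pneg Pinv)
    then show "\<Psi> ^^ 5 = id" using G by (auto simp: funpow5)
  qed
qed

end
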